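(* Let $A\bowtie^{\theta} I$ be an amalgamated Banach algebra as in the context and let $((a_\alpha,i_\alpha))_\alpha$ be a net in $A\bowtie^{\theta} I$. Then $((a_\alpha,i_\alpha))_\alpha$ is a left approximate identity for $A\bowtie^{\theta} I$ if and only if $(a_\alpha)_\alpha$ is a left approximate identity for $A$, $(\theta(a_\alpha)+i_\alpha)_\alpha$ is a left approximate identity for the algebra $\theta(A)+I$, and $i_\alpha\theta(a)\to 0$ in norm for every $a\in A$. Moreover, the same equivalence holds with "left approximate identity" replaced by "bounded left approximate identity" throughout.
   Context: Let $A$ and $B$ be Banach algebras, $\theta:A\to B$ a continuous algebra homomorphism with $\|\theta\|\le 1$, and $I$ a closed two-sided ideal of $B$. The amalgamated Banach algebra $A\bowtie^{\theta} I$ is the Banach space $\{(a,i): a\in A,\ i\in I\}$ with norm $\|(a,i)\|=\|a\|+\|i\|$ and product $(a,i)\cdot(a',i')=(aa',\ \theta(a)i'+i\theta(a')+ii')$. Here $\theta(A)+I=\{\theta(a)+j: a\in A, j\in I\}$, a subalgebra of $B$ with the norm of $B$. A net $(e_\alpha)$ in a normed algebra $C$ is a left approximate identity if $e_\alpha c\to c$ for all $c\in C$. *)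

theory Defs
  imports "HOL-Analysis.Analysis"
begin

definition directed :: "('i \<Rightarrow> 'i \<Rightarrow> bool) \<Rightarrow> bool" where
  "directed le \<longleftrightarrow> (\<forall>x. le x x) \<and> (\<forall>x y z. le x y \<longrightarrow> le y z \<longrightarrow> le x z)
      \<and> (\<forall>x y. \<exists>z. le x z \<and> le y z)"

definition net_filter :: "('i \<Rightarrow> 'i \<Rightarrow> bool) \<Rightarrow> 'i filter" where
  "net_filter le = (INF i. principal {j. le i j})"

definition closed_ideal :: "'b::real_normed_algebra set \<Rightarrow> bool" where
  "closed_ideal I \<longleftrightarrow> subspace I \<and> closed I \<and>
      (\<forall>b j. j \<in> I \<longrightarrow> b * j \<in> I \<and> j * b \<in> I)"

definition contractive_alg_hom :: "('a::real_normed_algebra \<Rightarrow> 'b::real_normed_algebra) \<Rightarrow> bool" where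
  "contractive_alg_hom \<theta> \<longleftrightarrow> bounded_linear \<theta> \<and> (\<forall>x y. \<theta> (x * y) = \<theta> x * \<theta> y)
      \<and> (\<forall>x. norm (\<theta> x) \<le> norm x)"

definition amalg_carrier :: "'b set \<Rightarrow> ('a \<times> 'b) set" where
  "amalg_carrier I = UNIV \<times> I"

definition amalg_mult :: "('a::real_normed_algebra \<Rightarrow> 'b::real_normed_algebra)
    \<Rightarrow> 'a \<times> 'b \<Rightarrow> 'a \<times> 'b \<Rightarrow> 'a \<times> 'b" where
  "amalg_mult \<theta> x y = (fst x * fst y, \<theta> (fst x) * snd y + snd x * \<theta> (fst y) + snd x * snd y)"

definition amalg_norm :: "'a::real_normed_vector \<times> 'b::real_normed_vector \<Rightarrow> real" where
  "amalg_norm x = norm (fst x) + norm (snd x)"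

definition theta_plus_ideal :: "('a \<Rightarrow> 'b::plus) \<Rightarrow> 'b set \<Rightarrow> 'b set" where
  "theta_plus_ideal \<theta> I = {\<theta> a + j | a j. j \<in> I}"

definition left_approx_identity ::
  "'i filter \<Rightarrow> 'c::ab_group_add set \<Rightarrow> ('c \<Rightarrow> 'c \<Rightarrow> 'c) \<Rightarrow> ('c \<Rightarrow> real) \<Rightarrow> ('i \<Rightarrow> 'c) \<Rightarrow> bool" where
  "left_approx_identity F S mul nrm e \<longleftrightarrow>
     (\<forall>\<alpha>. e \<alpha> \<in> S) \<and> (\<forall>c\<in>S. ((\<lambda>\<alpha>. nrm (mul (e \<alpha>) c - c)) \<longlongrightarrow> 0) F)"

definition bounded_left_approx_identity ::
  "'i filter \<Rightarrow> 'c::ab_group_add set \<Rightarrow> ('c \<Rightarrow> 'c \<Rightarrow> 'c) \<Rightarrow> ('c \<Rightarrow> real) \<Rightarrow> ('i \<Rightarrow> 'c) \<Rightarrow> bool" where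
  "bounded_left_approx_identity F S mul nrm e \<longleftrightarrow>
     left_approx_identity F S mul nrm e \<and> (\<exists>M. \<forall>\<alpha>. nrm (e \<alpha>) \<le> M)"

end

theory Submission
  imports Defs
begin

lemma sq0: "(\<And>x. 0 \<le> f x) \<Longrightarrow> (\<And>x. f x \<le> g x) \<Longrightarrow> (g \<longlongrightarrow> 0) F \<Longrightarrow> ((f::_\<Rightarrow>real) \<longlongrightarrow> 0) F"
  by (rule tendsto_sandwich[of "\<lambda>_. 0" f F g]) auto

lemma main_lai:
  fixes \<theta> :: "'a::{real_normed_algebra,banach} \<Rightarrow> 'b::{real_normed_algebra,banach}"
    and a :: "'i \<Rightarrow> 'a" and i :: "'i \<Rightarrow> 'b"
  assumes th: "contractive_alg_hom \<theta>"
    and iI: "\<forall>\<alpha>. i \<alpha> \<in> I" and I0: "0 \<in> I"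
  shows "left_approx_identity F (amalg_carrier I) (amalg_mult \<theta>) amalg_norm (\<lambda>\<alpha>. (a \<alpha>, i \<alpha>))
          \<longleftrightarrow> left_approx_identity F UNIV (*) norm a
            \<and> left_approx_identity F (theta_plus_ideal \<theta> I) (*) norm (\<lambda>\<alpha>. \<theta> (a \<alpha>) + i \<alpha>)
            \<and> (\<forall>x. ((\<lambda>\<alpha>. norm (i \<alpha> * \<theta> x)) \<longlongrightarrow> 0) F)"
proof -
  have lin: "linear \<theta>" using th unfolding contractive_alg_hom_def bounded_linear_def by auto
  have mul: "\<And>x y. \<theta> (x*y) = \<theta> x * \<theta> y" and nb: "\<And>x. norm (\<theta> x) \<le> norm x"
    using th unfolding contractive_alg_hom_def by auto
  have t0: "\<theta> 0 = 0" using lin by (simp add: linear_0)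
  have tdiff: "\<And>x y. \<theta> (x - y) = \<theta> x - \<theta> y" using lin by (simp add: linear_diff)
  have key: "\<And>\<alpha> x j. amalg_norm (amalg_mult \<theta> (a \<alpha>, i \<alpha>) (x, j) - (x, j))
      = norm (a \<alpha> * x - x) + norm ((\<theta> (a \<alpha>) + i \<alpha>) * j - j + i \<alpha> * \<theta> x)"
    by (simp add: amalg_mult_def amalg_norm_def algebra_simps)
  have mem1: "\<forall>\<alpha>. (a \<alpha>, i \<alpha>) \<in> amalg_carrier I" using iI by (simp add: amalg_carrier_def)
  have mem2: "\<forall>\<alpha>. \<theta> (a \<alpha>) + i \<alpha> \<in> theta_plus_ideal \<theta> I" using iI by (auto simp: theta_plus_ideal_def)
  show ?thesis
  proof
    assume L: "left_approx_identity F (amalg_carrier I) (amalg_mult \<theta>) amalg_norm (\<lambda>\<alpha>. (a \<alpha>, i \<alpha>))"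
    hence H: "\<And>x j. j \<in> I \<Longrightarrow> ((\<lambda>\<alpha>. norm (a \<alpha> * x - x) + norm ((\<theta> (a \<alpha>) + i \<alpha>) * j - j + i \<alpha> * \<theta> x)) \<longlongrightarrow> 0) F"
      unfolding left_approx_identity_def amalg_carrier_def using key by auto
    have z: "0 \<in> I" by (rule I0)
    show "left_approx_identity F UNIV (*) norm a
            \<and> left_approx_identity F (theta_plus_ideal \<theta> I) (*) norm (\<lambda>\<alpha>. \<theta> (a \<alpha>) + i \<alpha>)
            \<and> (\<forall>x. ((\<lambda>\<alpha>. norm (i \<alpha> * \<theta> x)) \<longlongrightarrow> 0) F)"
    proof (intro conjI allI)
      show "left_approx_identity F UNIV (*) norm a"
        unfolding left_approx_identity_def
      proof (intro conjI ballI)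
        fix c :: 'a
        show "((\<lambda>\<alpha>. norm (a \<alpha> * c - c)) \<longlongrightarrow> 0) F"
          by (rule sq0[OF _ _ H[OF z, of c]]) auto
      qed auto
      show "((\<lambda>\<alpha>. norm (i \<alpha> * \<theta> x)) \<longlongrightarrow> 0) F" for x
        by (rule sq0[OF _ _ H[OF z, of x]]) auto
      show "left_approx_identity F (theta_plus_ideal \<theta> I) (*) norm (\<lambda>\<alpha>. \<theta> (a \<alpha>) + i \<alpha>)"
        unfolding left_approx_identity_def
      proof (intro conjI ballI)
        show "\<forall>\<alpha>. \<theta> (a \<alpha>) + i \<alpha> \<in> theta_plus_ideal \<theta> I" by (rule mem2)
        fix c assume "c \<in> theta_plus_ideal \<theta> I"
        then obtain x j where c: "c = \<theta> x + j" and j: "j \<in> I" by (auto simp: theta_plus_ideal_def)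
        show "((\<lambda>\<alpha>. norm ((\<theta> (a \<alpha>) + i \<alpha>) * c - c)) \<longlongrightarrow> 0) F"
        proof (rule sq0[OF _ _ H[OF j, of x]])
          fix \<alpha>
          have e: "(\<theta> (a \<alpha>) + i \<alpha>) * c - c = \<theta> (a \<alpha> * x - x) + ((\<theta> (a \<alpha>) + i \<alpha>) * j - j + i \<alpha> * \<theta> x)"
            by (simp add: c tdiff mul algebra_simps)
          have "norm ((\<theta> (a \<alpha>) + i \<alpha>) * c - c) \<le> norm (\<theta> (a \<alpha> * x - x)) + norm ((\<theta> (a \<alpha>) + i \<alpha>) * j - j + i \<alpha> * \<theta> x)"
            unfolding e by (rule norm_triangle_ineq)
          also have "\<dots> \<le> norm (a \<alpha> * x - x) + norm ((\<theta> (a \<alpha>) + i \<alpha>) * j - j + i \<alpha> * \<theta> x)"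
            using nb by (simp add: add_mono)
          finally show "norm ((\<theta> (a \<alpha>) + i \<alpha>) * c - c) \<le> norm (a \<alpha> * x - x) + norm ((\<theta> (a \<alpha>) + i \<alpha>) * j - j + i \<alpha> * \<theta> x)" .
        qed auto
      qed
    qed
  next
    assume R: "left_approx_identity F UNIV (*) norm a
            \<and> left_approx_identity F (theta_plus_ideal \<theta> I) (*) norm (\<lambda>\<alpha>. \<theta> (a \<alpha>) + i \<alpha>)
            \<and> (\<forall>x. ((\<lambda>\<alpha>. norm (i \<alpha> * \<theta> x)) \<longlongrightarrow> 0) F)"
    show "left_approx_identity F (amalg_carrier I) (amalg_mult \<theta>) amalg_norm (\<lambda>\<alpha>. (a \<alpha>, i \<alpha>))"
      unfolding left_approx_identity_def
    proof (intro conjI ballI)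
      show "\<forall>\<alpha>. (a \<alpha>, i \<alpha>) \<in> amalg_carrier I" by (rule mem1)
      fix c :: "'a \<times> 'b" assume "c \<in> amalg_carrier I"
      then obtain x j where c: "c = (x, j)" and j: "j \<in> I" by (auto simp: amalg_carrier_def)
      have jm: "j \<in> theta_plus_ideal \<theta> I" unfolding theta_plus_ideal_def
        using j t0 by force
      have A: "((\<lambda>\<alpha>. norm (a \<alpha> * x - x)) \<longlongrightarrow> 0) F" using R unfolding left_approx_identity_def by auto
      have B: "((\<lambda>\<alpha>. norm ((\<theta> (a \<alpha>) + i \<alpha>) * j - j)) \<longlongrightarrow> 0) F" using R jm unfolding left_approx_identity_def by auto
      have C: "((\<lambda>\<alpha>. norm (i \<alpha> * \<theta> x)) \<longlongrightarrow> 0) F" using R by auto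
      have S: "((\<lambda>\<alpha>. norm (a \<alpha> * x - x) + (norm ((\<theta> (a \<alpha>) + i \<alpha>) * j - j) + norm (i \<alpha> * \<theta> x))) \<longlongrightarrow> 0) F"
        using tendsto_add[OF A tendsto_add[OF B C]] by simp
      show "((\<lambda>\<alpha>. amalg_norm (amalg_mult \<theta> (a \<alpha>, i \<alpha>) c - c)) \<longlongrightarrow> 0) F"
        unfolding c key
        by (rule sq0[OF _ _ S]) (auto intro: add_left_mono norm_triangle_ineq)
    qed
  qed
qed

theorem proposition2p1:
  fixes \<theta> :: "'a::{real_normed_algebra,banach} \<Rightarrow> 'b::{real_normed_algebra,banach}"
    and I :: "'b set"
    and le :: "'i \<Rightarrow> 'i \<Rightarrow> bool"
    and a :: "'i \<Rightarrow> 'a" and i :: "'i \<Rightarrow> 'b"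
  assumes "contractive_alg_hom \<theta>"
    and "closed_ideal I"
    and "directed le"
    and "\<forall>\<alpha>. i \<alpha> \<in> I"
  shows "(left_approx_identity (net_filter le) (amalg_carrier I) (amalg_mult \<theta>) amalg_norm
            (\<lambda>\<alpha>. (a \<alpha>, i \<alpha>))
          \<longleftrightarrow> left_approx_identity (net_filter le) UNIV (*) norm a
            \<and> left_approx_identity (net_filter le) (theta_plus_ideal \<theta> I) (*) norm
                (\<lambda>\<alpha>. \<theta> (a \<alpha>) + i \<alpha>)
            \<and> (\<forall>x. ((\<lambda>\<alpha>. norm (i \<alpha> * \<theta> x)) \<longlongrightarrow> 0) (net_filter le)))
       \<and> (bounded_left_approx_identity (net_filter le) (amalg_carrier I) (amalg_mult \<theta>) amalg_norm
            (\<lambda>\<alpha>. (a \<alpha>, i \<alpha>))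
          \<longleftrightarrow> bounded_left_approx_identity (net_filter le) UNIV (*) norm a
            \<and> bounded_left_approx_identity (net_filter le) (theta_plus_ideal \<theta> I) (*) norm
                (\<lambda>\<alpha>. \<theta> (a \<alpha>) + i \<alpha>)
            \<and> (\<forall>x. ((\<lambda>\<alpha>. norm (i \<alpha> * \<theta> x)) \<longlongrightarrow> 0) (net_filter le)))"
proof -
  have I0: "0 \<in> I" using assms(2) unfolding closed_ideal_def by (simp add: subspace_0)
  have th: "contractive_alg_hom \<theta>" by fact
  have nb: "\<And>x. norm (\<theta> x) \<le> norm x" using th unfolding contractive_alg_hom_def by auto
  note M = main_lai[OF assms(1) assms(4) I0, of "net_filter le" a]
  have N: "(\<exists>M. \<forall>\<alpha>. amalg_norm (a \<alpha>, i \<alpha>) \<le> M) \<longleftrightarrow>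
        (\<exists>M. \<forall>\<alpha>. norm (a \<alpha>) \<le> M) \<and> (\<exists>M. \<forall>\<alpha>. norm (\<theta> (a \<alpha>) + i \<alpha>) \<le> M)"
  proof
    assume "\<exists>M. \<forall>\<alpha>. amalg_norm (a \<alpha>, i \<alpha>) \<le> M"
    then obtain M where m: "\<And>\<alpha>. norm (a \<alpha>) + norm (i \<alpha>) \<le> M" by (auto simp: amalg_norm_def)
    have 1: "norm (a \<alpha>) \<le> M" for \<alpha> using m[of \<alpha>] by (smt (verit) norm_ge_zero)
    have 2: "norm (\<theta> (a \<alpha>) + i \<alpha>) \<le> M" for \<alpha>
      using m[of \<alpha>] nb[of "a \<alpha>"] norm_triangle_ineq[of "\<theta> (a \<alpha>)" "i \<alpha>"] by linarith
    show "(\<exists>M. \<forall>\<alpha>. norm (a \<alpha>) \<le> M) \<and> (\<exists>M. \<forall>\<alpha>. norm (\<theta> (a \<alpha>) + i \<alpha>) \<le> M)"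
      using 1 2 by blast
  next
    assume "(\<exists>M. \<forall>\<alpha>. norm (a \<alpha>) \<le> M) \<and> (\<exists>M. \<forall>\<alpha>. norm (\<theta> (a \<alpha>) + i \<alpha>) \<le> M)"
    then obtain M1 M2 where m1: "\<And>\<alpha>. norm (a \<alpha>) \<le> M1" and m2: "\<And>\<alpha>. norm (\<theta> (a \<alpha>) + i \<alpha>) \<le> M2" by blast
    have "amalg_norm (a \<alpha>, i \<alpha>) \<le> 2*M1 + M2" for \<alpha>
    proof -
      have "i \<alpha> = (\<theta> (a \<alpha>) + i \<alpha>) - \<theta> (a \<alpha>)" by simp
      hence "norm (i \<alpha>) \<le> norm (\<theta> (a \<alpha>) + i \<alpha>) + norm (\<theta> (a \<alpha>))"
        by (metis norm_triangle_ineq4)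
      thus ?thesis using m1[of \<alpha>] m2[of \<alpha>] nb[of "a \<alpha>"] by (simp add: amalg_norm_def)
    qed
    thus "\<exists>M. \<forall>\<alpha>. amalg_norm (a \<alpha>, i \<alpha>) \<le> M" by blast
  qed
  show ?thesis
    unfolding bounded_left_approx_identity_def using M N by auto
qed
end
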